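(* Let $X\in\mathbb{R}^n$ be arbitrary, $k\in[n]$, and let $\widehat\theta^{(k)}$ be any minimizer of $\|X-\theta\|^2$ over $\Theta_k^\uparrow$; let $\widehat\theta^{(n)}$ be the minimizer over $\Theta_n^\uparrow$. Let $0=\widehat a_0<\widehat a_1<\cdots<\widehat a_m=n$ be such that $(\widehat a_{j-1}:\widehat a_j]$, $j\in[m]$, are the maximal blocks of consecutive indices on which $\widehat\theta^{(k)}$ is constant, and let $\widehat A_k=\{\widehat a_1,\dots,\widehat a_m\}$ (similarly $\widehat A_n$ for $\widehat\theta^{(n)}$). Then: 1. For each $j\in[m]$, $\widehat{\theta}_i^{(k)}=\overline{X}_{(\widehat{a}_{j-1}:\widehat{a}_j]}$ for all $i\in(\widehat{a}_{j-1}:\widehat{a}_j]$. 2. For each $j\in[m-1]$ and all integers $0\leq s<\widehat{a}_j<t\leq n$, $$\overline{X}_{(s:\widehat{a}_j]}<\frac{\widehat{\theta}_{\widehat{a}_j}^{(k)}+\widehat{\theta}^{(k)}_{\widehat{a}_{j+1}}}{2}<\overline{X}_{(\widehat{a}_j:t]};$$ consequently $\widehat{\theta}_{\widehat{a}_j}^{(n)}<\frac{\widehat{\theta}^{(k)}_{\widehat{a}_j}+\widehat{\theta}^{(k)}_{\widehat{a}_{j+1}}}{2}<\widehat{\theta}_{\widehat{a}_j+1}^{(n)}$. 3. $\widehat{A}_k\subset\widehat{A}_n$.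
   Context: $[n]=\{1,\dots,n\}$. For reals $a\le b$, $(a:b]$ is the set of integers $i$ with $a<i\le b$; for nonempty $J$, $\overline X_J=|J|^{-1}\sum_{i\in J}X_i$. For $k\in[n]$, $\Theta_k^{\uparrow}$ is the set of $\theta\in\mathbb{R}^n$ for which there exist integers $0=a_0\le\cdots\le a_k=n$ and reals $\mu_1\le\cdots\le\mu_k$ with $\theta_i=\mu_j$ for all $i\in(a_{j-1}:a_j]$; $\Theta_n^\uparrow$ is the set of all nondecreasing vectors. *)

theory Defs
  imports Complex_Main
begin

text \<open>Vectors in R^n are modelled as functions nat => real; only the
  coordinates 1..n are relevant.\<close>

definition sqdist :: "nat \<Rightarrow> (nat \<Rightarrow> real) \<Rightarrow> (nat \<Rightarrow> real) \<Rightarrow> real" where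
  "sqdist n X \<theta> = (\<Sum>i\<in>{1..n}. (X i - \<theta> i)^2)"

definition Theta_up :: "nat \<Rightarrow> nat \<Rightarrow> (nat \<Rightarrow> real) set" where
  "Theta_up n k = {\<theta>. \<exists>(a::nat \<Rightarrow> nat) (\<mu>::nat \<Rightarrow> real).
      a 0 = 0 \<and> a k = n \<and> (\<forall>j<k. a j \<le> a (Suc j)) \<and>
      (\<forall>j\<in>{1..<k}. \<mu> j \<le> \<mu> (Suc j)) \<and>
      (\<forall>j\<in>{1..k}. \<forall>i\<in>{a (j-1)<..a j}. \<theta> i = \<mu> j)}"

definition Theta_mono :: "nat \<Rightarrow> (nat \<Rightarrow> real) set" where
  "Theta_mono n = {\<theta>. \<forall>i j. 1 \<le> i \<longrightarrow> i \<le> j \<longrightarrow> j \<le> n \<longrightarrow> \<theta> i \<le> \<theta> j}"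

definition is_minimizer :: "nat \<Rightarrow> (nat \<Rightarrow> real) \<Rightarrow> (nat \<Rightarrow> real) set \<Rightarrow> (nat \<Rightarrow> real) \<Rightarrow> bool" where
  "is_minimizer n X S \<theta> \<longleftrightarrow> \<theta> \<in> S \<and> (\<forall>\<theta>'\<in>S. sqdist n X \<theta> \<le> sqdist n X \<theta>')"

definition block_ends :: "nat \<Rightarrow> (nat \<Rightarrow> real) \<Rightarrow> nat set" where
  "block_ends n \<theta> = {i\<in>{1..n}. i = n \<or> \<theta> i \<noteq> \<theta> (Suc i)}"

definition avg :: "(nat \<Rightarrow> real) \<Rightarrow> nat \<Rightarrow> nat \<Rightarrow> real" where
  "avg X s t = (\<Sum>i\<in>{s<..t}. X i) / real (t - s)"

end

theory Submission
  imports Defs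
begin
lemma sum_ind:
  assumes "finite B" "A \<subseteq> B"
  shows "(\<Sum>i\<in>B. (f i::real) * (if i \<in> A then c else 0)) = c * sum f A"
proof -
  have "(\<Sum>i\<in>B. f i * (if i \<in> A then c else 0)) = (\<Sum>i\<in>B. if i \<in> A then c * f i else 0)"
    by (rule sum.cong) auto
  also have "\<dots> = (\<Sum>i\<in>B \<inter> A. c * f i)" by (simp add: sum.inter_restrict assms)
  also have "B \<inter> A = A" using assms by auto
  finally show ?thesis by (simp add: sum_distrib_left)
qed

lemma pert:
  assumes "is_minimizer n X S \<theta>" "\<delta> > 0"
    "\<And>\<epsilon>. 0 < \<epsilon> \<Longrightarrow> \<epsilon> < \<delta> \<Longrightarrow> (\<lambda>i. \<theta> i + \<epsilon> * h i) \<in> S"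
  shows "(\<Sum>i\<in>{1..n}. (X i - \<theta> i) * h i) \<le> 0"
proof (rule ccontr)
  define A where "A = (\<Sum>i\<in>{1..n}. (X i - \<theta> i) * h i)"
  define B where "B = (\<Sum>i\<in>{1..n}. (h i)^2)"
  assume "\<not> ?thesis"
  hence A: "A > 0" by (simp add: A_def)
  have B: "B \<ge> 0" unfolding B_def by (simp add: sum_nonneg)
  define \<epsilon> where "\<epsilon> = min (\<delta>/2) (A / (B + 1))"
  have e: "0 < \<epsilon>" "\<epsilon> < \<delta>" using A B assms(2) by (auto simp: \<epsilon>_def)
  have eq: "sqdist n X (\<lambda>i. \<theta> i + \<epsilon> * h i) = sqdist n X \<theta> - 2 * \<epsilon> * A + \<epsilon>^2 * B"
    unfolding sqdist_def A_def B_def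
    by (simp add: power2_eq_square algebra_simps sum.distrib sum_subtractf sum_distrib_left)
  have "sqdist n X \<theta> \<le> sqdist n X (\<lambda>i. \<theta> i + \<epsilon> * h i)"
    using assms(1) assms(3)[OF e] by (auto simp: is_minimizer_def)
  hence "2 * \<epsilon> * A \<le> \<epsilon>^2 * B" using eq by simp
  hence "2 * A \<le> \<epsilon> * B" using e by (simp add: power2_eq_square)
  moreover have "\<epsilon> * B \<le> A / (B+1) * B" using B by (intro mult_right_mono) (auto simp: \<epsilon>_def)
  moreover have "A / (B+1) * B < 2 * A" using A B by (simp add: field_simps) (smt (verit) mult_nonneg_nonneg)
  ultimately show False by simp
qed

lemma theta_up_intro:
  assumes "1 \<le> p" "p \<le> k" "c 0 = 0" "c p = n" "\<forall>j<p. c j \<le> c (Suc j)"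
    "\<forall>j\<in>{1..<p}. \<nu> j \<le> \<nu> (Suc j)"
    "\<forall>j\<in>{1..p}. \<forall>i\<in>{c (j-1)<..c j}. \<theta> i = \<nu> j"
  shows "\<theta> \<in> Theta_up n k"
proof -
  define a' where "a' j = (if j \<le> p then c j else n)" for j
  define \<mu>' where "\<mu>' j = \<nu> (min j p)" for j
  have "a' 0 = 0" using assms by (simp add: a'_def)
  moreover have "a' k = n" using assms by (auto simp: a'_def)
  moreover have "\<forall>j<k. a' j \<le> a' (Suc j)"
    using assms by (auto simp: a'_def) (metis le_antisym not_less_eq_eq order.refl)
  moreover have "\<forall>j\<in>{1..<k}. \<mu>' j \<le> \<mu>' (Suc j)"
    using assms by (auto simp: \<mu>'_def min_def) (metis le_antisym not_less_eq_eq order.refl)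
  moreover have "\<forall>j\<in>{1..k}. \<forall>i\<in>{a' (j-1)<..a' j}. \<theta> i = \<mu>' j"
  proof (intro ballI)
    fix j i assume j: "j \<in> {1..k}" and i: "i \<in> {a' (j-1)<..a' j}"
    show "\<theta> i = \<mu>' j"
    proof (cases "j \<le> p")
      case True
      hence "a' (j-1) = c (j-1)" "a' j = c j" by (auto simp: a'_def)
      thus ?thesis using True i j assms(7) by (auto simp: \<mu>'_def)
    next
      case False
      hence "j - 1 = p \<or> j - 1 > p" by auto
      hence "a' (j-1) = n" using assms by (auto simp: a'_def)
      moreover have "a' j = n" using False by (simp add: a'_def)
      ultimately show ?thesis using i by simp
    qed
  qed
  ultimately show ?thesis unfolding Theta_up_def by blast
qed

lemma theta_up_props:
  assumes "\<theta> \<in> Theta_up n k"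
  shows "\<theta> \<in> Theta_mono n" "card (block_ends n \<theta>) \<le> k"
proof -
  obtain b :: "nat \<Rightarrow> nat" and \<mu> :: "nat \<Rightarrow> real" where
    b0: "b 0 = 0" and bk: "b k = n" and bs: "\<forall>j<k. b j \<le> b (Suc j)" and
    ms: "\<forall>j\<in>{1..<k}. \<mu> j \<le> \<mu> (Suc j)" and
    pc: "\<forall>j\<in>{1..k}. \<forall>i\<in>{b (j-1)<..b j}. \<theta> i = \<mu> j"
    using assms unfolding Theta_up_def by blast
  have bm: "b x \<le> b y" if "x \<le> y" "y \<le> k" for x y
    using that
  proof (induction y)
    case 0 thus ?case by simp
  next
    case (Suc y) thus ?case using bs by (metis le_Suc_eq le_trans Suc_le_lessD order.refl)
  qed
  have mm: "\<mu> x \<le> \<mu> y" if "1 \<le> x" "x \<le> y" "y \<le> k" for x y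
    using that
  proof (induction y)
    case 0 thus ?case by simp
  next
    case (Suc y)
    show ?case
    proof (cases "x = Suc y")
      case True thus ?thesis by simp
    next
      case False
      hence "x \<le> y" using Suc by simp
      hence "\<mu> x \<le> \<mu> y" using Suc by simp
      also have "\<mu> y \<le> \<mu> (Suc y)" using ms Suc \<open>x \<le> y\<close> by auto
      finally show ?thesis .
    qed
  qed
  have piece: "\<exists>j\<in>{1..k}. b (j-1) < i \<and> i \<le> b j" if "1 \<le> i" "i \<le> n" for i
  proof -
    define j where "j = (LEAST j. i \<le> b j)"
    have ij: "i \<le> b j" unfolding j_def using bk that by (metis LeastI)
    have jk: "j \<le> k" unfolding j_def using bk that by (metis Least_le)
    have j1: "j \<ge> 1" using ij b0 that by (cases j) auto
    have "\<not> i \<le> b (j-1)" unfolding j_def using j1 j_def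
      by (metis One_nat_def Suc_le_lessD diff_Suc_less not_less_Least)
    hence "b (j-1) < i" by simp
    thus ?thesis using ij jk j1 by (intro bexI[of _ j]) auto
  qed
  show "\<theta> \<in> Theta_mono n"
    unfolding Theta_mono_def
  proof (intro CollectI allI impI)
    fix i i' assume h: "1 \<le> i" "i \<le> i'" "i' \<le> n"
    have "1 \<le> i'" "i \<le> n" using h by auto
    obtain j where j: "j \<in> {1..k}" "b (j-1) < i" "i \<le> b j" using piece[of i] h \<open>i \<le> n\<close> by blast
    obtain j' where j': "j' \<in> {1..k}" "b (j'-1) < i'" "i' \<le> b j'" using piece[of i'] h \<open>1 \<le> i'\<close> by blast
    have "j \<le> j'"
    proof (rule ccontr)
      assume "\<not> j \<le> j'"
      hence "b j' \<le> b (j-1)" using j by (intro bm) auto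
      thus False using j j' h by linarith
    qed
    hence "\<mu> j \<le> \<mu> j'" using j j' by (intro mm) auto
    thus "\<theta> i \<le> \<theta> i'" using pc j j' by auto
  qed
  have "block_ends n \<theta> \<subseteq> b ` {1..k}"
  proof
    fix i assume i: "i \<in> block_ends n \<theta>"
    hence h: "1 \<le> i" "i \<le> n" "i = n \<or> \<theta> i \<noteq> \<theta> (Suc i)" by (auto simp: block_ends_def)
    obtain j where j: "j \<in> {1..k}" "b (j-1) < i" "i \<le> b j" using piece h by force
    have bj: "b j \<le> n" using bm[of j k] j bk by auto
    show "i \<in> b ` {1..k}"
    proof (cases "i = b j")
      case True thus ?thesis using j by auto
    next
      case False
      hence "Suc i \<le> b j" using j by auto
      hence "\<theta> (Suc i) = \<mu> j" "\<theta> i = \<mu> j" using pc j by auto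
      moreover have "i \<noteq> n" using False j bj by auto
      ultimately show ?thesis using h by auto
    qed
  qed
  hence "card (block_ends n \<theta>) \<le> card (b ` {1..k})" by (intro card_mono) auto
  also have "\<dots> \<le> card {1..k}" by (rule card_image_le) auto
  finally show "card (block_ends n \<theta>) \<le> k" by simp
qed

lemma sqdist_diff:
  assumes "A \<subseteq> {1..n}" "\<forall>i\<in>{1..n}-A. \<theta>' i = \<theta> i"
  shows "sqdist n X \<theta>' - sqdist n X \<theta> = (\<Sum>i\<in>A. (X i - \<theta>' i)^2 - (X i - \<theta> i)^2)"
proof -
  have "sqdist n X \<theta>' - sqdist n X \<theta> = (\<Sum>i\<in>{1..n}. (X i - \<theta>' i)^2 - (X i - \<theta> i)^2)"
    by (simp add: sqdist_def sum_subtractf)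
  also have "\<dots> = (\<Sum>i\<in>A. (X i - \<theta>' i)^2 - (X i - \<theta> i)^2)"
    using assms by (intro sum.mono_neutral_right) auto
  finally show ?thesis .
qed

lemma avg_eq: "s < t \<Longrightarrow> avg X s t * real (t - s) = sum X {s<..t}"
  by (simp add: avg_def)

lemma sum_sq_diff:
  "(\<Sum>i\<in>{s<..t}. (X i - b)^2 - (X i - (a::real))^2) = (a - b) * (2 * sum X {s<..t} - real (t - s) * (a + b))"
proof -
  have "(\<Sum>i\<in>{s<..t}. (X i - b)^2 - (X i - (a::real))^2) = (\<Sum>i\<in>{s<..t}. (a - b) * (2 * X i - (a + b)))"
    by (rule sum.cong) (auto simp: power2_eq_square algebra_simps)
  also have "\<dots> = (a - b) * (\<Sum>i\<in>{s<..t}. (2 * X i - (a + b)))"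
    by (simp add: sum_distrib_left)
  also have "(\<Sum>i\<in>{s<..t}. (2 * X i - (a + b))) = 2 * sum X {s<..t} - real (t - s) * (a + b)"
    by (simp add: sum_subtractf sum_distrib_left)
  finally show ?thesis .
qed

lemma N1:
  assumes "is_minimizer n X (Theta_mono n) \<theta>" "1 \<le> i" "i \<le> n"
  shows "\<exists>s<i. \<theta> i \<le> avg X s i"
proof -
  define R where "R = {r. r < i \<and> (r = 0 \<or> \<theta> r \<noteq> \<theta> i)}"
  define s where "s = Max R"
  have fR: "finite R" "0 \<in> R" using assms by (auto simp: R_def)
  hence sR: "s \<in> R" unfolding s_def by (intro Max_in) auto
  hence si: "s < i" by (simp add: R_def)
  have cst: "\<theta> r = \<theta> i" if "s < r" "r \<le> i" for r
  proof (cases "r = i")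
    case False
    hence "r \<notin> R" using that fR s_def by (meson Max_ge leD)
    thus ?thesis using that False by (auto simp: R_def)
  qed simp
  have mono: "\<theta> x \<le> \<theta> y" if "1 \<le> x" "x \<le> y" "y \<le> n" for x y
    using assms(1) that by (auto simp: is_minimizer_def Theta_mono_def)
  define \<delta> where "\<delta> = (if s = 0 then 1 else \<theta> i - \<theta> s)"
  have d: "\<delta> > 0"
  proof (cases "s = 0")
    case False
    hence "\<theta> s \<noteq> \<theta> i" using sR by (auto simp: R_def)
    moreover have "\<theta> s \<le> \<theta> i" using mono[of s i] False si assms by auto
    ultimately show ?thesis using False by (simp add: \<delta>_def)
  qed (simp add: \<delta>_def)
  define h where "h j = (if j \<in> {s<..i} then (-1::real) else 0)" for j
  have "(\<Sum>j\<in>{1..n}. (X j - \<theta> j) * h j) \<le> 0"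
  proof (rule pert[OF assms(1) d])
    fix \<epsilon> :: real assume e: "0 < \<epsilon>" "\<epsilon> < \<delta>"
    show "(\<lambda>j. \<theta> j + \<epsilon> * h j) \<in> Theta_mono n"
      unfolding Theta_mono_def
    proof (intro CollectI allI impI)
      fix x y assume xy: "1 \<le> x" "x \<le> y" "y \<le> n"
      have m: "\<theta> x \<le> \<theta> y" using mono xy by auto
      show "\<theta> x + \<epsilon> * h x \<le> \<theta> y + \<epsilon> * h y"
      proof (cases "y \<in> {s<..i} \<and> x \<notin> {s<..i}")
        case True
        hence "x \<le> s" "s \<noteq> 0" using xy by auto
        hence "\<theta> x \<le> \<theta> s" using mono xy si assms(3) by auto
        moreover have "\<theta> y = \<theta> i" using True cst[of y] by simp
        ultimately show ?thesis using True e \<open>s \<noteq> 0\<close> by (simp add: h_def \<delta>_def)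
      next
        case False
        show ?thesis
        proof (cases "x \<in> {s<..i} \<and> y \<in> {s<..i}")
          case True
          hence "\<theta> x = \<theta> i \<and> \<theta> y = \<theta> i" using cst[of x] cst[of y] by simp
          thus ?thesis using True by (simp add: h_def)
        next
          case F2: False
          hence "h x \<le> h y" using False by (auto simp: h_def)
          hence "\<epsilon> * h x \<le> \<epsilon> * h y" using e by (intro mult_left_mono) auto
          thus ?thesis using m by linarith
        qed
      qed
    qed
  qed
  also have "(\<Sum>j\<in>{1..n}. (X j - \<theta> j) * h j) = - sum (\<lambda>j. X j - \<theta> j) {s<..i}"
    unfolding h_def using assms si by (subst sum_ind) auto
  also have "sum (\<lambda>j. X j - \<theta> j) {s<..i} = sum X {s<..i} - real (i - s) * \<theta> i"
  proof -
    have "sum \<theta> {s<..i} = sum (\<lambda>_. \<theta> i) {s<..i}"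
      by (rule sum.cong[OF refl]) (rule cst; simp)
    thus ?thesis by (simp add: sum_subtractf)
  qed
  finally have "real (i - s) * \<theta> i \<le> sum X {s<..i}" by simp
  hence "\<theta> i \<le> avg X s i" using si by (simp add: avg_def field_simps)
  thus ?thesis using si by auto
qed

lemma N2:
  assumes "is_minimizer n X (Theta_mono n) \<theta>" "i < n"
  shows "\<exists>t. i < t \<and> t \<le> n \<and> avg X i t \<le> \<theta> (Suc i)"
proof -
  define R where "R = {r. i < r \<and> r \<le> n \<and> (r = n \<or> \<theta> (Suc r) \<noteq> \<theta> (Suc i))}"
  define t where "t = Min R"
  have fR: "finite R" "n \<in> R" using assms by (auto simp: R_def)
  hence tR: "t \<in> R" unfolding t_def by (intro Min_in) auto
  hence it: "i < t" "t \<le> n" by (auto simp: R_def)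
  have cst: "\<theta> r = \<theta> (Suc i)" if "i < r" "r \<le> t" for r
  proof (cases "r = Suc i")
    case False
    have "r - 1 \<notin> R"
    proof
      assume "r - 1 \<in> R"
      hence "t \<le> r - 1" unfolding t_def using fR(1) by (simp add: Min_le)
      thus False using that by linarith
    qed
    moreover have "i < r - 1" "r - 1 \<le> n" using that False it by auto
    ultimately show ?thesis using that False by (auto simp: R_def)
  qed simp
  have mono: "\<theta> x \<le> \<theta> y" if "1 \<le> x" "x \<le> y" "y \<le> n" for x y
    using assms(1) that by (auto simp: is_minimizer_def Theta_mono_def)
  define \<delta> where "\<delta> = (if t = n then 1 else \<theta> (Suc t) - \<theta> (Suc i))"
  have d: "\<delta> > 0"
  proof (cases "t = n")
    case False
    hence "\<theta> (Suc t) \<noteq> \<theta> (Suc i)" using tR by (auto simp: R_def)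
    moreover have "\<theta> (Suc i) \<le> \<theta> (Suc t)" using mono[of "Suc i" "Suc t"] False it by auto
    ultimately show ?thesis using False by (simp add: \<delta>_def)
  qed (simp add: \<delta>_def)
  define h where "h j = (if j \<in> {i<..t} then (1::real) else 0)" for j
  have "(\<Sum>j\<in>{1..n}. (X j - \<theta> j) * h j) \<le> 0"
  proof (rule pert[OF assms(1) d])
    fix \<epsilon> :: real assume e: "0 < \<epsilon>" "\<epsilon> < \<delta>"
    show "(\<lambda>j. \<theta> j + \<epsilon> * h j) \<in> Theta_mono n"
      unfolding Theta_mono_def
    proof (intro CollectI allI impI)
      fix x y assume xy: "1 \<le> x" "x \<le> y" "y \<le> n"
      have m: "\<theta> x \<le> \<theta> y" using mono xy by auto
      show "\<theta> x + \<epsilon> * h x \<le> \<theta> y + \<epsilon> * h y"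
      proof (cases "x \<in> {i<..t} \<and> y \<notin> {i<..t}")
        case True
        hence "Suc t \<le> y" "t \<noteq> n" using xy by auto
        have "\<theta> (Suc t) \<le> \<theta> y" using mono[of "Suc t" y] \<open>Suc t \<le> y\<close> xy(3) by simp
        moreover have "\<theta> x = \<theta> (Suc i)" using True cst[of x] by simp
        moreover have "h x = 1" "h y = 0" using True by (auto simp: h_def)
        moreover have "\<epsilon> < \<theta> (Suc t) - \<theta> (Suc i)" using e \<open>t \<noteq> n\<close> by (simp add: \<delta>_def)
        ultimately show ?thesis by simp
      next
        case False
        show ?thesis
        proof (cases "x \<in> {i<..t} \<and> y \<in> {i<..t}")
          case True
          hence "\<theta> x = \<theta> (Suc i) \<and> \<theta> y = \<theta> (Suc i)" using cst[of x] cst[of y] by simp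
          thus ?thesis using True by (simp add: h_def)
        next
          case F2: False
          hence "h x \<le> h y" using False by (auto simp: h_def)
          hence "\<epsilon> * h x \<le> \<epsilon> * h y" using e by (intro mult_left_mono) auto
          thus ?thesis using m by linarith
        qed
      qed
    qed
  qed
  also have "(\<Sum>j\<in>{1..n}. (X j - \<theta> j) * h j) = sum (\<lambda>j. X j - \<theta> j) {i<..t}"
    unfolding h_def using assms it by (subst sum_ind) auto
  also have "sum (\<lambda>j. X j - \<theta> j) {i<..t} = sum X {i<..t} - real (t - i) * \<theta> (Suc i)"
  proof -
    have "sum \<theta> {i<..t} = sum (\<lambda>_. \<theta> (Suc i)) {i<..t}"
      by (rule sum.cong[OF refl]) (rule cst; simp)
    thus ?thesis by (simp add: sum_subtractf)
  qed
  finally have "sum X {i<..t} \<le> real (t - i) * \<theta> (Suc i)" by simp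
  hence "avg X i t \<le> \<theta> (Suc i)" using it by (simp add: avg_def field_simps)
  thus ?thesis using it by auto
qed

lemma sum_split:
  assumes "s \<le> u" "u \<le> t"
  shows "sum f {s<..t} = sum f {s<..u} + sum f {u<..(t::nat)}"
proof -
  have "{s<..t} = {s<..u} \<union> {u<..t}" using assms by auto
  moreover have "{s<..u} \<inter> {u<..t} = {}" by auto
  ultimately show ?thesis by (simp add: sum.union_disjoint)
qed

lemma mono_step:
  assumes "\<forall>j<m. c j \<le> c (Suc j)" "x \<le> y" "y \<le> m"
  shows "c x \<le> (c y::nat)"
  using assms(2,3)
proof (induction y)
  case 0 thus ?case by simp
next
  case (Suc y)
  show ?case
  proof (cases "x = Suc y")
    case False
    hence "c x \<le> c y" using Suc by auto
    also have "c y \<le> c (Suc y)" using assms(1) Suc by auto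
    finally show ?thesis .
  qed simp
qed

lemma piece_disj:
  assumes "\<forall>j<m. c j \<le> c (Suc j)" "j \<in> {1..m}" "j' \<in> {1..m}"
    "i \<in> {c (j-1)<..c j}" "i \<in> {c (j'-1)<..(c j'::nat)}"
  shows "j = j'"
proof (rule ccontr)
  assume "j \<noteq> j'"
  hence "j < j' \<or> j' < j" by auto
  thus False
  proof
    assume "j < j'" hence "c j \<le> c (j'-1)" using assms by (intro mono_step[OF assms(1)]) auto
    thus False using assms by auto
  next
    assume "j' < j" hence "c j' \<le> c (j-1)" using assms by (intro mono_step[OF assms(1)]) auto
    thus False using assms by auto
  qed
qed

lemma lin_aux1:
  fixes S1 L1 L2 p q r :: real
  shows "2*S1 < L1*(p+q) \<Longrightarrow> L1*(p+q) \<le> L1*(q+r) \<Longrightarrow> 2*(L2*q) < L2*(q+r) \<Longrightarrow> 2*(S1 + L2*q) < (L1+L2)*(q+r)"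
  by (simp add: algebra_simps)

lemma lin_aux2:
  fixes S3 L3 L2 p q r :: real
  shows "L3*(q+r) < 2*S3 \<Longrightarrow> L3*(p+q) \<le> L3*(q+r) \<Longrightarrow> L2*(p+q) < 2*(L2*q) \<Longrightarrow> (L2+L3)*(p+q) < 2*(L2*q + S3)"
  by (simp add: algebra_simps)

lemma div_aux1:
  fixes S L p q :: real
  shows "0 < L \<Longrightarrow> 2*S < L*(p+q) \<Longrightarrow> S / L < (p+q)/2"
  by (simp add: divide_less_eq algebra_simps)

lemma div_aux2:
  fixes S L p q :: real
  shows "0 < L \<Longrightarrow> L*(p+q) < 2*S \<Longrightarrow> (p+q)/2 < S / L"
  by (simp add: less_divide_eq algebra_simps)

locale stp =
  fixes n k m :: nat and X \<theta>k \<theta>n :: "nat \<Rightarrow> real" and a :: "nat \<Rightarrow> nat"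
  assumes k1: "1 \<le> k" and kn: "k \<le> n"
    and mk: "is_minimizer n X (Theta_up n k) \<theta>k"
    and mn: "is_minimizer n X (Theta_mono n) \<theta>n"
    and a0: "a 0 = 0" and am: "a m = n" and as: "\<forall>j<m. a j < a (Suc j)"
    and ab: "a ` {1..m} = block_ends n \<theta>k"
begin

lemma a_lt: "x < y \<Longrightarrow> y \<le> m \<Longrightarrow> a x < a y"
proof (induction y)
  case 0 thus ?case by simp
next
  case (Suc y)
  have "a y < a (Suc y)" using as Suc by auto
  thus ?case using Suc by (cases "x = y") auto
qed

lemma a_le: "x \<le> y \<Longrightarrow> y \<le> m \<Longrightarrow> a x \<le> a y"
  using a_lt by (cases "x = y") (auto simp: le_less)

lemma a_bd: "j \<le> m \<Longrightarrow> a j \<le> n"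
  using a_le[of j m] am by simp

lemma n1: "1 \<le> n" using k1 kn by simp

lemma m1: "1 \<le> m" using n1 am a0 by (cases m) auto

lemma a_rev: "a x < a y \<Longrightarrow> x \<le> m \<Longrightarrow> y \<le> m \<Longrightarrow> x < y"
  using a_le by (meson leD not_le_imp_less)

lemma a_rev_le: "a x \<le> a y \<Longrightarrow> x \<le> m \<Longrightarrow> y \<le> m \<Longrightarrow> x \<le> y"
  using a_lt by (meson leD not_le_imp_less)

lemma blk_disj:
  assumes "j \<in> {1..m}" "j' \<in> {1..m}" "i \<in> {a (j-1)<..a j}" "i \<in> {a (j'-1)<..a j'}"
  shows "j = j'"
proof (rule ccontr)
  assume "j \<noteq> j'"
  hence "j < j' \<or> j' < j" by auto
  thus False
  proof
    assume "j < j'" hence "a j \<le> a (j'-1)" using assms by (intro a_le) auto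
    thus False using assms by auto
  next
    assume "j' < j" hence "a j' \<le> a (j-1)" using assms by (intro a_le) auto
    thus False using assms by auto
  qed
qed

lemma const:
  assumes "j \<in> {1..m}" "i \<in> {a (j-1)<..a j}"
  shows "\<theta>k i = \<theta>k (a j)"
proof -
  have step: "\<theta>k r = \<theta>k (Suc r)" if "a (j-1) < r" "r < a j" for r
  proof -
    have "r \<notin> block_ends n \<theta>k"
    proof
      assume "r \<in> block_ends n \<theta>k"
      hence "r \<in> a ` {1..m}" using ab by simp
      then obtain j' where j': "j' \<in> {1..m}" "r = a j'" by blast
      have "j - 1 < j'" using a_rev[of "j-1" j'] that j' assms by auto
      moreover have "j' < j" using a_rev[of j' j] that j' assms by auto
      ultimately show False by auto
    qed
    moreover have "1 \<le> r" "r < n" using that a_bd[of j] assms by auto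
    ultimately show ?thesis by (auto simp: block_ends_def)
  qed
  have "\<forall>r. a j - d = r \<longrightarrow> a (j-1) < r \<longrightarrow> \<theta>k r = \<theta>k (a j)" for d
  proof (induction d)
    case 0 thus ?case by simp
  next
    case (Suc d)
    show ?case
    proof (intro allI impI)
      fix r assume r: "a j - Suc d = r" "a (j-1) < r"
      hence "r < a j" by auto
      hence "\<theta>k r = \<theta>k (Suc r)" using step r by auto
      also have "Suc r = a j - d" using r by arith
      hence "\<theta>k (Suc r) = \<theta>k (a j)" using Suc r by auto
      finally show "\<theta>k r = \<theta>k (a j)" .
    qed
  qed
  thus ?thesis using assms by (metis diff_diff_cancel greaterThanAtMost_iff)
qed

lemma thk_mono: "\<theta>k \<in> Theta_mono n"
  using theta_up_props(1) mk by (auto simp: is_minimizer_def)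

lemma thk_le: "1 \<le> x \<Longrightarrow> x \<le> y \<Longrightarrow> y \<le> n \<Longrightarrow> \<theta>k x \<le> \<theta>k y"
  using thk_mono by (auto simp: Theta_mono_def)

lemma mk_le: "m \<le> k"
proof -
  have "inj_on a {1..m}" by (rule inj_onI) (metis a_lt atLeastAtMost_iff nat_neq_iff less_irrefl)
  hence "card (a ` {1..m}) = m" by (simp add: card_image)
  moreover have "card (block_ends n \<theta>k) \<le> k" using theta_up_props(2) mk by (auto simp: is_minimizer_def)
  ultimately show ?thesis using ab by simp
qed

lemma mu_lt: assumes "1 \<le> j" "j < m" shows "\<theta>k (a j) < \<theta>k (a (Suc j))"
proof -
  have "a j \<in> block_ends n \<theta>k" using ab assms by auto
  moreover have "a j \<noteq> n" using a_lt[of j m] assms am by auto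
  ultimately have "\<theta>k (a j) \<noteq> \<theta>k (Suc (a j))" by (auto simp: block_ends_def)
  moreover have "\<theta>k (Suc (a j)) = \<theta>k (a (Suc j))"
    using const[of "Suc j" "Suc (a j)"] assms a_lt[of j "Suc j"] by auto
  moreover have "\<theta>k (a j) \<le> \<theta>k (a (Suc j))"
    using thk_le[of "a j" "a (Suc j)"] a_lt[of 0 j] a0 assms a_lt[of j "Suc j"] a_bd[of "Suc j"] by auto
  ultimately show ?thesis by auto
qed

lemma mu_le: assumes "1 \<le> j" "j \<le> j'" "j' \<le> m" shows "\<theta>k (a j) \<le> \<theta>k (a j')"
  using thk_le[of "a j" "a j'"] a_lt[of 0 j] a0 assms a_le[of j j'] a_bd[of j'] by auto

lemma gap_ex: "\<exists>G>0. \<forall>x\<in>{1..<m}. G \<le> \<theta>k (a (Suc x)) - \<theta>k (a x)"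
proof -
  define G where "G = Min ((\<lambda>x. \<theta>k (a (Suc x)) - \<theta>k (a x)) ` {1..<m} \<union> {1})"
  have "G > 0" unfolding G_def using mu_lt by (subst Min_gr_iff) auto
  moreover have "\<forall>x\<in>{1..<m}. G \<le> \<theta>k (a (Suc x)) - \<theta>k (a x)"
  proof
    fix x assume "x \<in> {1..<m}"
    thus "G \<le> \<theta>k (a (Suc x)) - \<theta>k (a x)" unfolding G_def by (intro Min_le) auto
  qed
  ultimately show ?thesis by blast
qed

lemma blk_sub: "j \<in> {1..m} \<Longrightarrow> {a (j-1)<..a j} \<subseteq> {1..n}"
  using a_bd[of j] by auto

lemma in_c:
  assumes "c 0 = 0" "c m = n" "\<forall>j<m. c j \<le> c (Suc j)"
    "\<forall>j\<in>{1..<m}. \<nu> j \<le> \<nu> (Suc j)"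
    "\<forall>j\<in>{1..m}. \<forall>i\<in>{c (j-1)<..c j}. \<psi> i = \<nu> j"
  shows "\<psi> \<in> Theta_up n k"
  by (rule theta_up_intro[OF m1 mk_le assms])

lemma as_le: "\<forall>j<m. a j \<le> a (Suc j)" using as by (simp add: less_imp_le)

lemma part1:
  assumes j: "j \<in> {1..m}"
  shows "sum X {a (j-1)<..a j} = real (a j - a (j-1)) * \<theta>k (a j)"
proof -
  obtain G where G: "G > 0" "\<forall>x\<in>{1..<m}. G \<le> \<theta>k (a (Suc x)) - \<theta>k (a x)"
    using gap_ex by blast
  let ?B = "{a (j-1)<..a j}"
  have key: "\<sigma> * sum (\<lambda>i. X i - \<theta>k i) ?B \<le> 0" if \<sigma>: "\<sigma> = 1 \<or> \<sigma> = -1" for \<sigma> :: real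
  proof -
    define h where "h i = (if i \<in> ?B then \<sigma> else 0)" for i
    have "(\<Sum>i\<in>{1..n}. (X i - \<theta>k i) * h i) \<le> 0"
    proof (rule pert[OF mk G(1)])
      fix \<epsilon> :: real assume e: "0 < \<epsilon>" "\<epsilon> < G"
      show "(\<lambda>i. \<theta>k i + \<epsilon> * h i) \<in> Theta_up n k"
      proof (rule in_c[where c=a and \<nu>="\<lambda>j'. \<theta>k (a j') + (if j' = j then \<epsilon> * \<sigma> else 0)"])
        show "a 0 = 0" "a m = n" "\<forall>j<m. a j \<le> a (Suc j)" using a0 am as_le by auto
        show "\<forall>j'\<in>{1..<m}. \<theta>k (a j') + (if j' = j then \<epsilon> * \<sigma> else 0)
               \<le> \<theta>k (a (Suc j')) + (if Suc j' = j then \<epsilon> * \<sigma> else 0)"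
        proof
          fix j' assume j': "j' \<in> {1..<m}"
          have g: "G \<le> \<theta>k (a (Suc j')) - \<theta>k (a j')" using G j' by auto
          show "\<theta>k (a j') + (if j' = j then \<epsilon> * \<sigma> else 0)
               \<le> \<theta>k (a (Suc j')) + (if Suc j' = j then \<epsilon> * \<sigma> else 0)"
            using g e \<sigma> by auto
        qed
        show "\<forall>j'\<in>{1..m}. \<forall>i\<in>{a (j'-1)<..a j'}. \<theta>k i + \<epsilon> * h i = \<theta>k (a j') + (if j' = j then \<epsilon> * \<sigma> else 0)"
        proof (intro ballI)
          fix j' i assume j': "j' \<in> {1..m}" and i: "i \<in> {a (j'-1)<..a j'}"
          have "\<theta>k i = \<theta>k (a j')" using const j' i by blast
          moreover have "h i = (if j' = j then \<sigma> else 0)"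
            using blk_disj[OF j j' _ i] i unfolding h_def by auto
          ultimately show "\<theta>k i + \<epsilon> * h i = \<theta>k (a j') + (if j' = j then \<epsilon> * \<sigma> else 0)" by simp
        qed
      qed
    qed
    also have "(\<Sum>i\<in>{1..n}. (X i - \<theta>k i) * h i) = \<sigma> * sum (\<lambda>i. X i - \<theta>k i) ?B"
      unfolding h_def using sum_ind[of "{1..n}" ?B "\<lambda>i. X i - \<theta>k i" \<sigma>] blk_sub[OF j] by simp
    finally show ?thesis .
  qed
  have "sum (\<lambda>i. X i - \<theta>k i) ?B = 0" using key[of 1] key[of "-1"] by linarith
  moreover have "sum (\<lambda>i. X i - \<theta>k i) ?B = sum X ?B - real (a j - a (j-1)) * \<theta>k (a j)"
  proof -
    have "sum \<theta>k ?B = sum (\<lambda>_. \<theta>k (a j)) ?B" by (rule sum.cong[OF refl]) (rule const[OF j])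
    thus ?thesis by (simp add: sum_subtractf)
  qed
  ultimately show ?thesis by simp
qed

lemma left_base:
  assumes j: "1 \<le> j" "j < m" and s: "a (j-1) \<le> s" "s < a j"
  shows "2 * sum X {s<..a j} < real (a j - s) * (\<theta>k (a j) + \<theta>k (a (Suc j)))"
proof -
  obtain G where G: "G > 0" "\<forall>x\<in>{1..<m}. G \<le> \<theta>k (a (Suc x)) - \<theta>k (a x)"
    using gap_ex by blast
  define \<mu>a where "\<mu>a = \<theta>k (a j)"
  define \<mu>b where "\<mu>b = \<theta>k (a (Suc j))"
  have ab_lt: "\<mu>a < \<mu>b" using mu_lt j by (simp add: \<mu>a_def \<mu>b_def)
  have gj: "G \<le> \<mu>b - \<mu>a" using G j by (auto simp: \<mu>a_def \<mu>b_def)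
  have ajs: "a j < a (Suc j)" using as j by auto
  have jm: "j \<in> {1..m}" "Suc j \<in> {1..m}" using j by auto
  define \<theta>' where "\<theta>' i = (if i \<in> {s<..a j} then \<mu>b else \<theta>k i)" for i
  define c where "c = a(j := s)"
  have c0: "c 0 = 0" using j a0 by (simp add: c_def)
  have cm: "c m = n" using j am by (simp add: c_def)
  have cj: "c (j-1) = a (j-1)" "c j = s" "c (Suc j) = a (Suc j)" using j by (auto simp: c_def)
  have cs: "\<forall>j'<m. c j' \<le> c (Suc j')"
  proof (intro allI impI)
    fix j' assume j': "j' < m"
    show "c j' \<le> c (Suc j')"
    proof (cases "j' = j")
      case True thus ?thesis using cj s ajs by auto
    next
      case False
      show ?thesis
      proof (cases "Suc j' = j")
        case True
        hence "j' = j - 1" by auto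
        thus ?thesis using cj s True by auto
      next
        case False2: False
        thus ?thesis using False as j' by (simp add: c_def less_imp_le)
      qed
    qed
  qed
  have cother: "c (j'-1) = a (j'-1) \<and> c j' = a j'" if "j' \<noteq> j" "j' \<noteq> Suc j" "1 \<le> j'" for j'
    using that by (auto simp: c_def)
  have pc: "\<theta>' i = \<theta>k (a j')" if j': "j' \<in> {1..m}" and i: "i \<in> {c (j'-1)<..c j'}" for j' i
  proof (cases "j' = j")
    case True
    hence "i \<in> {a (j-1)<..a j}" "i \<notin> {s<..a j}" using i cj s by auto
    thus ?thesis using const[OF jm(1), of i] True by (simp add: \<theta>'_def)
  next
    case False
    show ?thesis
    proof (cases "j' = Suc j")
      case True
      hence i2: "s < i" "i \<le> a (Suc j)" using i cj by auto
      show ?thesis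
      proof (cases "i \<le> a j")
        case True thus ?thesis using i2 \<open>j' = Suc j\<close> by (simp add: \<theta>'_def \<mu>b_def)
      next
        case False
        hence "i \<in> {a (Suc j - 1)<..a (Suc j)}" using i2 by auto
        hence "\<theta>k i = \<theta>k (a (Suc j))" using const[OF jm(2)] by blast
        thus ?thesis using \<open>j' = Suc j\<close> False by (simp add: \<theta>'_def)
      qed
    next
      case False2: False
      have ib: "i \<in> {a (j'-1)<..a j'}" using i cother[OF False False2] j' by auto
      have "i \<notin> {s<..a j}"
      proof
        assume "i \<in> {s<..a j}"
        hence "i \<in> {a (j-1)<..a j}" using s by auto
        thus False using blk_disj[OF jm(1) j' _ ib] False by auto
      qed
      thus ?thesis using const[OF j' ib] by (auto simp: \<theta>'_def)
    qed
  qed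
  have mono_nu: "\<forall>j'\<in>{1..<m}. \<theta>k (a j') \<le> \<theta>k (a (Suc j'))" using mu_le by auto
  have in1: "\<theta>' \<in> Theta_up n k"
    by (rule in_c[OF c0 cm cs mono_nu]) (use pc in blast)
  have A_sub: "{s<..a j} \<subseteq> {1..n}" using a_bd[of j] j by auto
  have L0: "0 < real (a j - s)" using s by simp
  have diff: "sqdist n X \<theta>' - sqdist n X \<theta>k = (\<mu>a - \<mu>b) * (2 * sum X {s<..a j} - real (a j - s) * (\<mu>a + \<mu>b))"
  proof -
    have "sqdist n X \<theta>' - sqdist n X \<theta>k = (\<Sum>i\<in>{s<..a j}. (X i - \<theta>' i)^2 - (X i - \<theta>k i)^2)"
      by (rule sqdist_diff[OF A_sub]) (auto simp: \<theta>'_def)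
    also have "\<dots> = (\<Sum>i\<in>{s<..a j}. (X i - \<mu>b)^2 - (X i - \<mu>a)^2)"
    proof (rule sum.cong[OF refl])
      fix i assume "i \<in> {s<..a j}"
      moreover have "i \<in> {a (j-1)<..a j}" using \<open>i \<in> {s<..a j}\<close> s by auto
      ultimately have "\<theta>' i = \<mu>b" "\<theta>k i = \<mu>a" using const[OF jm(1), of i] by (auto simp: \<theta>'_def \<mu>a_def)
      thus "(X i - \<theta>' i)^2 - (X i - \<theta>k i)^2 = (X i - \<mu>b)^2 - (X i - \<mu>a)^2" by simp
    qed
    also have "\<dots> = (\<mu>a - \<mu>b) * (2 * sum X {s<..a j} - real (a j - s) * (\<mu>a + \<mu>b))"
      by (rule sum_sq_diff)
    finally show ?thesis .
  qed
  have "sqdist n X \<theta>k \<le> sqdist n X \<theta>'" using mk in1 by (auto simp: is_minimizer_def)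
  hence le: "2 * sum X {s<..a j} \<le> real (a j - s) * (\<mu>a + \<mu>b)"
  proof -
    have "0 \<le> (\<mu>a - \<mu>b) * (2 * sum X {s<..a j} - real (a j - s) * (\<mu>a + \<mu>b))"
      using diff \<open>sqdist n X \<theta>k \<le> sqdist n X \<theta>'\<close> by linarith
    thus ?thesis using ab_lt by (simp add: zero_le_mult_iff)
  qed
  show ?thesis
  proof (rule ccontr)
    assume "\<not> ?thesis"
    hence eq: "2 * sum X {s<..a j} = real (a j - s) * (\<mu>a + \<mu>b)" using le by (simp add: \<mu>a_def \<mu>b_def)
    hence "sqdist n X \<theta>' = sqdist n X \<theta>k" using diff by simp
    hence min': "is_minimizer n X (Theta_up n k) \<theta>'" using mk in1 by (auto simp: is_minimizer_def)
    define h where "h i = (if i \<in> {s<..a (Suc j)} then (-1::real) else 0)" for i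
    have "(\<Sum>i\<in>{1..n}. (X i - \<theta>' i) * h i) \<le> 0"
    proof (rule pert[OF min' G(1)])
      fix \<epsilon> :: real assume e: "0 < \<epsilon>" "\<epsilon> < G"
      show "(\<lambda>i. \<theta>' i + \<epsilon> * h i) \<in> Theta_up n k"
      proof (rule in_c[OF c0 cm cs, where \<nu>="\<lambda>j'. \<theta>k (a j') - (if j' = Suc j then \<epsilon> else 0)"])
        show "\<forall>j'\<in>{1..<m}. \<theta>k (a j') - (if j' = Suc j then \<epsilon> else 0)
               \<le> \<theta>k (a (Suc j')) - (if Suc j' = Suc j then \<epsilon> else 0)"
        proof
          fix j' assume j': "j' \<in> {1..<m}"
          have "\<theta>k (a j') \<le> \<theta>k (a (Suc j'))" using mono_nu j' by auto
          thus "\<theta>k (a j') - (if j' = Suc j then \<epsilon> else 0)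
               \<le> \<theta>k (a (Suc j')) - (if Suc j' = Suc j then \<epsilon> else 0)"
            using gj e unfolding \<mu>a_def \<mu>b_def by auto
        qed
        show "\<forall>j'\<in>{1..m}. \<forall>i\<in>{c (j'-1)<..c j'}. \<theta>' i + \<epsilon> * h i = \<theta>k (a j') - (if j' = Suc j then \<epsilon> else 0)"
        proof (intro ballI)
          fix j' i assume j': "j' \<in> {1..m}" and i: "i \<in> {c (j'-1)<..c j'}"
          have "h i = (if j' = Suc j then -1 else 0)"
          proof (cases "j' = Suc j")
            case True thus ?thesis using i cj by (auto simp: h_def)
          next
            case False
            have "i \<notin> {c (Suc j - 1)<..c (Suc j)}"
              using piece_disj[OF cs j' jm(2) i] False by auto
            thus ?thesis using False cj by (auto simp: h_def)
          qed
          thus "\<theta>' i + \<epsilon> * h i = \<theta>k (a j') - (if j' = Suc j then \<epsilon> else 0)" using pc[OF j' i] by simp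
        qed
      qed
    qed
    also have "(\<Sum>i\<in>{1..n}. (X i - \<theta>' i) * h i) = - sum (\<lambda>i. X i - \<theta>' i) {s<..a (Suc j)}"
    proof -
      have "{s<..a (Suc j)} \<subseteq> {1..n}" using a_bd[of "Suc j"] j by auto
      thus ?thesis unfolding h_def using sum_ind[of "{1..n}" "{s<..a (Suc j)}" "\<lambda>i. X i - \<theta>' i" "-1"] by simp
    qed
    finally have ge: "0 \<le> sum (\<lambda>i. X i - \<theta>' i) {s<..a (Suc j)}" by simp
    have "sum \<theta>' {s<..a (Suc j)} = sum (\<lambda>_. \<mu>b) {s<..a (Suc j)}"
    proof (rule sum.cong[OF refl])
      fix i assume "i \<in> {s<..a (Suc j)}"
      hence "i \<in> {c (Suc j - 1)<..c (Suc j)}" using cj by auto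
      thus "\<theta>' i = \<mu>b" using pc[OF jm(2)] by (simp add: \<mu>b_def)
    qed
    hence "sum (\<lambda>i. X i - \<theta>' i) {s<..a (Suc j)} = sum X {s<..a (Suc j)} - real (a (Suc j) - s) * \<mu>b"
      by (simp add: sum_subtractf)
    moreover have "sum X {s<..a (Suc j)} = sum X {s<..a j} + sum X {a j<..a (Suc j)}"
      using s ajs by (intro sum_split) auto
    moreover have "sum X {a j<..a (Suc j)} = real (a (Suc j) - a j) * \<mu>b"
      using part1[OF jm(2)] by (simp add: \<mu>b_def)
    moreover have "real (a (Suc j) - s) = real (a (Suc j) - a j) + real (a j - s)"
      using s ajs by simp
    ultimately have "0 \<le> sum X {s<..a j} - real (a j - s) * \<mu>b" using ge by (simp add: algebra_simps)
    hence "0 \<le> 2 * sum X {s<..a j} - 2 * real (a j - s) * \<mu>b" by simp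
    hence "0 \<le> real (a j - s) * (\<mu>a - \<mu>b)" using eq by (simp add: algebra_simps)
    moreover have "real (a j - s) * (\<mu>a - \<mu>b) < 0" using L0 ab_lt by (simp add: mult_pos_neg)
    ultimately show False by linarith
  qed
qed

lemma right_base:
  assumes j: "1 \<le> j" "j < m" and t: "a j < t" "t \<le> a (Suc j)"
  shows "real (t - a j) * (\<theta>k (a j) + \<theta>k (a (Suc j))) < 2 * sum X {a j<..t}"
proof -
  obtain G where G: "G > 0" "\<forall>x\<in>{1..<m}. G \<le> \<theta>k (a (Suc x)) - \<theta>k (a x)"
    using gap_ex by blast
  define \<mu>a where "\<mu>a = \<theta>k (a j)"
  define \<mu>b where "\<mu>b = \<theta>k (a (Suc j))"
  have ab_lt: "\<mu>a < \<mu>b" using mu_lt j by (simp add: \<mu>a_def \<mu>b_def)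
  have gj: "G \<le> \<mu>b - \<mu>a" using G j by (auto simp: \<mu>a_def \<mu>b_def)
  have ajs: "a (j-1) < a j" using as j by (metis One_nat_def Suc_pred less_imp_diff_less not_less_eq_eq le_less_Suc_eq le_zero_eq less_Suc_eq_le zero_less_one leD leI)
  have jm: "j \<in> {1..m}" "Suc j \<in> {1..m}" using j by auto
  define \<theta>' where "\<theta>' i = (if i \<in> {a j<..t} then \<mu>a else \<theta>k i)" for i
  define c where "c = a(j := t)"
  have c0: "c 0 = 0" using j a0 by (simp add: c_def)
  have cm: "c m = n" using j am by (simp add: c_def)
  have cj: "c (j-1) = a (j-1)" "c j = t" "c (Suc j) = a (Suc j)" using j by (auto simp: c_def)
  have cs: "\<forall>j'<m. c j' \<le> c (Suc j')"
  proof (intro allI impI)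
    fix j' assume j': "j' < m"
    show "c j' \<le> c (Suc j')"
    proof (cases "j' = j")
      case True thus ?thesis using cj t by auto
    next
      case False
      show ?thesis
      proof (cases "Suc j' = j")
        case True
        hence "j' = j - 1" by auto
        thus ?thesis using cj t ajs True by auto
      next
        case False2: False
        thus ?thesis using False as j' by (simp add: c_def less_imp_le)
      qed
    qed
  qed
  have cother: "c (j'-1) = a (j'-1) \<and> c j' = a j'" if "j' \<noteq> j" "j' \<noteq> Suc j" "1 \<le> j'" for j'
    using that by (auto simp: c_def)
  have pc: "\<theta>' i = \<theta>k (a j')" if j': "j' \<in> {1..m}" and i: "i \<in> {c (j'-1)<..c j'}" for j' i
  proof (cases "j' = j")
    case True
    hence i2: "a (j-1) < i" "i \<le> t" using i cj by auto
    show ?thesis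
    proof (cases "i \<le> a j")
      case True
      hence "i \<in> {a (j-1)<..a j}" using i2 by auto
      hence "\<theta>k i = \<theta>k (a j)" using const[OF jm(1)] by blast
      thus ?thesis using True \<open>j' = j\<close> by (simp add: \<theta>'_def)
    next
      case False
      thus ?thesis using i2 \<open>j' = j\<close> by (simp add: \<theta>'_def \<mu>a_def)
    qed
  next
    case False
    show ?thesis
    proof (cases "j' = Suc j")
      case True
      hence i2: "t < i" "i \<le> a (Suc j)" using i cj by auto
      hence "i \<in> {a (Suc j - 1)<..a (Suc j)}" using t by auto
      hence "\<theta>k i = \<theta>k (a (Suc j))" using const[OF jm(2)] by blast
      thus ?thesis using i2 True by (simp add: \<theta>'_def)
    next
      case False2: False
      have ib: "i \<in> {a (j'-1)<..a j'}" using i cother[OF False False2] j' by auto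
      have "i \<notin> {a j<..t}"
      proof
        assume "i \<in> {a j<..t}"
        hence "i \<in> {a (Suc j - 1)<..a (Suc j)}" using t by auto
        thus False using blk_disj[OF jm(2) j' _ ib] False2 by auto
      qed
      thus ?thesis using const[OF j' ib] by (auto simp: \<theta>'_def)
    qed
  qed
  have mono_nu: "\<forall>j'\<in>{1..<m}. \<theta>k (a j') \<le> \<theta>k (a (Suc j'))" using mu_le by auto
  have in1: "\<theta>' \<in> Theta_up n k"
    by (rule in_c[OF c0 cm cs mono_nu]) (use pc in blast)
  have A_sub: "{a j<..t} \<subseteq> {1..n}" using a_bd[of "Suc j"] j t by auto
  have L0: "0 < real (t - a j)" using t by simp
  have diff: "sqdist n X \<theta>' - sqdist n X \<theta>k = (\<mu>b - \<mu>a) * (2 * sum X {a j<..t} - real (t - a j) * (\<mu>b + \<mu>a))"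
  proof -
    have "sqdist n X \<theta>' - sqdist n X \<theta>k = (\<Sum>i\<in>{a j<..t}. (X i - \<theta>' i)^2 - (X i - \<theta>k i)^2)"
      by (rule sqdist_diff[OF A_sub]) (auto simp: \<theta>'_def)
    also have "\<dots> = (\<Sum>i\<in>{a j<..t}. (X i - \<mu>a)^2 - (X i - \<mu>b)^2)"
    proof (rule sum.cong[OF refl])
      fix i assume "i \<in> {a j<..t}"
      moreover have "i \<in> {a (Suc j - 1)<..a (Suc j)}" using \<open>i \<in> {a j<..t}\<close> t by auto
      ultimately have "\<theta>' i = \<mu>a" "\<theta>k i = \<mu>b" using const[OF jm(2), of i] by (auto simp: \<theta>'_def \<mu>b_def)
      thus "(X i - \<theta>' i)^2 - (X i - \<theta>k i)^2 = (X i - \<mu>a)^2 - (X i - \<mu>b)^2" by simp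
    qed
    also have "\<dots> = (\<mu>b - \<mu>a) * (2 * sum X {a j<..t} - real (t - a j) * (\<mu>b + \<mu>a))"
      by (rule sum_sq_diff)
    finally show ?thesis .
  qed
  have "sqdist n X \<theta>k \<le> sqdist n X \<theta>'" using mk in1 by (auto simp: is_minimizer_def)
  hence le: "real (t - a j) * (\<mu>b + \<mu>a) \<le> 2 * sum X {a j<..t}"
  proof -
    have "0 \<le> (\<mu>b - \<mu>a) * (2 * sum X {a j<..t} - real (t - a j) * (\<mu>b + \<mu>a))"
      using diff \<open>sqdist n X \<theta>k \<le> sqdist n X \<theta>'\<close> by linarith
    thus ?thesis using ab_lt by (simp add: zero_le_mult_iff)
  qed
  show ?thesis
  proof (rule ccontr)
    assume "\<not> ?thesis"
    hence eq: "2 * sum X {a j<..t} = real (t - a j) * (\<mu>b + \<mu>a)" using le by (simp add: \<mu>a_def \<mu>b_def algebra_simps)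
    hence "sqdist n X \<theta>' = sqdist n X \<theta>k" using diff by simp
    hence min': "is_minimizer n X (Theta_up n k) \<theta>'" using mk in1 by (auto simp: is_minimizer_def)
    define h where "h i = (if i \<in> {a (j-1)<..t} then (1::real) else 0)" for i
    have "(\<Sum>i\<in>{1..n}. (X i - \<theta>' i) * h i) \<le> 0"
    proof (rule pert[OF min' G(1)])
      fix \<epsilon> :: real assume e: "0 < \<epsilon>" "\<epsilon> < G"
      show "(\<lambda>i. \<theta>' i + \<epsilon> * h i) \<in> Theta_up n k"
      proof (rule in_c[OF c0 cm cs, where \<nu>="\<lambda>j'. \<theta>k (a j') + (if j' = j then \<epsilon> else 0)"])
        show "\<forall>j'\<in>{1..<m}. \<theta>k (a j') + (if j' = j then \<epsilon> else 0)
               \<le> \<theta>k (a (Suc j')) + (if Suc j' = j then \<epsilon> else 0)"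
        proof
          fix j' assume j': "j' \<in> {1..<m}"
          have "\<theta>k (a j') \<le> \<theta>k (a (Suc j'))" using mono_nu j' by auto
          thus "\<theta>k (a j') + (if j' = j then \<epsilon> else 0)
               \<le> \<theta>k (a (Suc j')) + (if Suc j' = j then \<epsilon> else 0)"
            using gj e unfolding \<mu>a_def \<mu>b_def by auto
        qed
        show "\<forall>j'\<in>{1..m}. \<forall>i\<in>{c (j'-1)<..c j'}. \<theta>' i + \<epsilon> * h i = \<theta>k (a j') + (if j' = j then \<epsilon> else 0)"
        proof (intro ballI)
          fix j' i assume j': "j' \<in> {1..m}" and i: "i \<in> {c (j'-1)<..c j'}"
          have "h i = (if j' = j then 1 else 0)"
          proof (cases "j' = j")
            case True thus ?thesis using i cj by (auto simp: h_def)
          next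
            case False
            have "i \<notin> {c (j - 1)<..c j}"
              using piece_disj[OF cs j' jm(1) i] False by auto
            thus ?thesis using False cj by (auto simp: h_def)
          qed
          thus "\<theta>' i + \<epsilon> * h i = \<theta>k (a j') + (if j' = j then \<epsilon> else 0)" using pc[OF j' i] by simp
        qed
      qed
    qed
    also have "(\<Sum>i\<in>{1..n}. (X i - \<theta>' i) * h i) = sum (\<lambda>i. X i - \<theta>' i) {a (j-1)<..t}"
    proof -
      have "{a (j-1)<..t} \<subseteq> {1..n}" using a_bd[of "Suc j"] j t by auto
      thus ?thesis unfolding h_def using sum_ind[of "{1..n}" "{a (j-1)<..t}" "\<lambda>i. X i - \<theta>' i" "1"] by simp
    qed
    finally have ge: "sum (\<lambda>i. X i - \<theta>' i) {a (j-1)<..t} \<le> 0" by simp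
    have "sum \<theta>' {a (j-1)<..t} = sum (\<lambda>_. \<mu>a) {a (j-1)<..t}"
    proof (rule sum.cong[OF refl])
      fix i assume "i \<in> {a (j-1)<..t}"
      hence "i \<in> {c (j - 1)<..c j}" using cj by auto
      thus "\<theta>' i = \<mu>a" using pc[OF jm(1)] by (simp add: \<mu>a_def)
    qed
    hence "sum (\<lambda>i. X i - \<theta>' i) {a (j-1)<..t} = sum X {a (j-1)<..t} - real (t - a (j-1)) * \<mu>a"
      by (simp add: sum_subtractf)
    moreover have "sum X {a (j-1)<..t} = sum X {a (j-1)<..a j} + sum X {a j<..t}"
      using t ajs by (intro sum_split) auto
    moreover have "sum X {a (j-1)<..a j} = real (a j - a (j-1)) * \<mu>a"
      using part1[OF jm(1)] by (simp add: \<mu>a_def)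
    moreover have "real (t - a (j-1)) = real (a j - a (j-1)) + real (t - a j)"
      using t ajs by simp
    ultimately have "sum X {a j<..t} - real (t - a j) * \<mu>a \<le> 0" using ge by (simp add: algebra_simps)
    hence "2 * sum X {a j<..t} - 2 * real (t - a j) * \<mu>a \<le> 0" by simp
    hence "real (t - a j) * (\<mu>b - \<mu>a) \<le> 0" using eq by (simp add: algebra_simps)
    moreover have "0 < real (t - a j) * (\<mu>b - \<mu>a)" using L0 ab_lt by simp
    ultimately show False by linarith
  qed
qed

lemma left_all:
  "1 \<le> j \<Longrightarrow> j < m \<Longrightarrow> s < a j \<Longrightarrow>
   2 * sum X {s<..a j} < real (a j - s) * (\<theta>k (a j) + \<theta>k (a (Suc j)))"
proof (induction j arbitrary: s)
  case 0 thus ?case by simp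
next
  case (Suc j)
  show ?case
  proof (cases "a j \<le> s")
    case True thus ?thesis using left_base[of "Suc j" s] Suc.prems by simp
  next
    case False
    hence sj: "s < a j" by simp
    hence j1: "1 \<le> j" using a0 by (cases j) auto
    have ajs: "a j < a (Suc j)" using as Suc.prems by auto
    have IH: "2 * sum X {s<..a j} < real (a j - s) * (\<theta>k (a j) + \<theta>k (a (Suc j)))"
      using Suc.IH[OF j1 _ sj] Suc.prems by simp
    have blk: "sum X {a j<..a (Suc j)} = real (a (Suc j) - a j) * \<theta>k (a (Suc j))"
      using part1[of "Suc j"] Suc.prems by simp
    have spl: "sum X {s<..a (Suc j)} = sum X {s<..a j} + sum X {a j<..a (Suc j)}"
      using sj ajs by (intro sum_split) auto
    have L: "real (a (Suc j) - s) = real (a j - s) + real (a (Suc j) - a j)" using sj ajs by simp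
    have m1': "\<theta>k (a j) < \<theta>k (a (Suc j))" using mu_lt[of j] j1 Suc.prems by simp
    have m2: "\<theta>k (a (Suc j)) < \<theta>k (a (Suc (Suc j)))" using mu_lt[of "Suc j"] Suc.prems by simp
    have i1: "real (a j - s) * (\<theta>k (a j) + \<theta>k (a (Suc j))) \<le> real (a j - s) * (\<theta>k (a (Suc j)) + \<theta>k (a (Suc (Suc j))))"
      using m1' m2 by (intro mult_left_mono) auto
    have i2: "2 * (real (a (Suc j) - a j) * \<theta>k (a (Suc j))) < real (a (Suc j) - a j) * (\<theta>k (a (Suc j)) + \<theta>k (a (Suc (Suc j))))"
    proof -
      have "0 < real (a (Suc j) - a j)" using ajs by simp
      hence "real (a (Suc j) - a j) * (2 * \<theta>k (a (Suc j))) < real (a (Suc j) - a j) * (\<theta>k (a (Suc j)) + \<theta>k (a (Suc (Suc j))))"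
        using m2 by (intro mult_strict_left_mono) auto
      thus ?thesis by (metis mult.left_commute)
    qed
    show ?thesis unfolding spl blk L by (rule lin_aux1[OF IH i1 i2])
  qed
qed

lemma right_all:
  "1 \<le> j \<Longrightarrow> j < m \<Longrightarrow> a j < t \<Longrightarrow> t \<le> n \<Longrightarrow>
   real (t - a j) * (\<theta>k (a j) + \<theta>k (a (Suc j))) < 2 * sum X {a j<..t}"
proof (induction "m - j" arbitrary: j rule: less_induct)
  case less
  show ?case
  proof (cases "t \<le> a (Suc j)")
    case True thus ?thesis using right_base[of j t] less.prems by simp
  next
    case False
    hence tj: "a (Suc j) < t" by simp
    have jm: "Suc j < m"
    proof (rule ccontr)
      assume "\<not> Suc j < m" hence "Suc j = m" using less.prems by simp
      thus False using tj am less.prems by simp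
    qed
    have ajs: "a j < a (Suc j)" using as less.prems by auto
    have IH: "real (t - a (Suc j)) * (\<theta>k (a (Suc j)) + \<theta>k (a (Suc (Suc j)))) < 2 * sum X {a (Suc j)<..t}"
      using less.hyps[of "Suc j"] jm tj less.prems by simp
    have blk: "sum X {a j<..a (Suc j)} = real (a (Suc j) - a j) * \<theta>k (a (Suc j))"
      using part1[of "Suc j"] less.prems by simp
    have spl: "sum X {a j<..t} = sum X {a j<..a (Suc j)} + sum X {a (Suc j)<..t}"
      using tj ajs by (intro sum_split) auto
    have L: "real (t - a j) = real (a (Suc j) - a j) + real (t - a (Suc j))" using tj ajs by simp
    have m1': "\<theta>k (a j) < \<theta>k (a (Suc j))" using mu_lt[of j] less.prems by simp
    have m2: "\<theta>k (a (Suc j)) < \<theta>k (a (Suc (Suc j)))" using mu_lt[of "Suc j"] jm by simp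
    have i1: "real (t - a (Suc j)) * (\<theta>k (a j) + \<theta>k (a (Suc j))) \<le> real (t - a (Suc j)) * (\<theta>k (a (Suc j)) + \<theta>k (a (Suc (Suc j))))"
      using m1' m2 by (intro mult_left_mono) auto
    have i2: "real (a (Suc j) - a j) * (\<theta>k (a j) + \<theta>k (a (Suc j))) < 2 * (real (a (Suc j) - a j) * \<theta>k (a (Suc j)))"
    proof -
      have "0 < real (a (Suc j) - a j)" using ajs by simp
      hence "real (a (Suc j) - a j) * (\<theta>k (a j) + \<theta>k (a (Suc j))) < real (a (Suc j) - a j) * (2 * \<theta>k (a (Suc j)))"
        using m1' by (intro mult_strict_left_mono) auto
      thus ?thesis by (metis mult.left_commute)
    qed
    show ?thesis unfolding spl blk L by (rule lin_aux2[OF IH i1 i2])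
  qed
qed

lemma main:
  shows "(\<forall>j\<in>{1..m}. \<forall>i\<in>{a (j-1)<..a j}. \<theta>k i = avg X (a (j-1)) (a j))
    \<and> (\<forall>j\<in>{1..m-1}.
         (\<forall>s t. s < a j \<longrightarrow> a j < t \<longrightarrow> t \<le> n \<longrightarrow>
            avg X s (a j) < (\<theta>k (a j) + \<theta>k (a (Suc j))) / 2 \<and>
            (\<theta>k (a j) + \<theta>k (a (Suc j))) / 2 < avg X (a j) t)
       \<and> \<theta>n (a j) < (\<theta>k (a j) + \<theta>k (a (Suc j))) / 2
       \<and> (\<theta>k (a j) + \<theta>k (a (Suc j))) / 2 < \<theta>n (Suc (a j)))
    \<and> block_ends n \<theta>k \<subseteq> block_ends n \<theta>n"
proof -
  have P1: "\<forall>j\<in>{1..m}. \<forall>i\<in>{a (j-1)<..a j}. \<theta>k i = avg X (a (j-1)) (a j)"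
  proof (intro ballI)
    fix j i assume j: "j \<in> {1..m}" and i: "i \<in> {a (j-1)<..a j}"
    have lt: "a (j-1) < a j" using a_lt[of "j-1" j] j by auto
    have "avg X (a (j-1)) (a j) = real (a j - a (j-1)) * \<theta>k (a j) / real (a j - a (j-1))"
      unfolding avg_def using part1[OF j] by simp
    also have "\<dots> = \<theta>k (a j)" using lt by simp
    finally show "\<theta>k i = avg X (a (j-1)) (a j)" using const[OF j i] by simp
  qed
  have P2: "(\<forall>s t. s < a j \<longrightarrow> a j < t \<longrightarrow> t \<le> n \<longrightarrow>
            avg X s (a j) < (\<theta>k (a j) + \<theta>k (a (Suc j))) / 2 \<and>
            (\<theta>k (a j) + \<theta>k (a (Suc j))) / 2 < avg X (a j) t)
       \<and> \<theta>n (a j) < (\<theta>k (a j) + \<theta>k (a (Suc j))) / 2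
       \<and> (\<theta>k (a j) + \<theta>k (a (Suc j))) / 2 < \<theta>n (Suc (a j))" if j: "j \<in> {1..m-1}" for j
  proof -
    have j1: "1 \<le> j" "j < m" using j m1 by auto
    have L: "avg X s (a j) < (\<theta>k (a j) + \<theta>k (a (Suc j))) / 2" if "s < a j" for s
      unfolding avg_def using that by (intro div_aux1 left_all j1) auto
    have R: "(\<theta>k (a j) + \<theta>k (a (Suc j))) / 2 < avg X (a j) t" if "a j < t" "t \<le> n" for t
      unfolding avg_def using that by (intro div_aux2 right_all j1) auto
    have ajn: "1 \<le> a j" "a j < n" using a_lt[of 0 j] a_lt[of j m] a0 am j1 by auto
    obtain s where s: "s < a j" "\<theta>n (a j) \<le> avg X s (a j)" using N1[OF mn ajn(1)] ajn by auto
    obtain t where t: "a j < t" "t \<le> n" "avg X (a j) t \<le> \<theta>n (Suc (a j))" using N2[OF mn ajn(2)] by auto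
    show ?thesis using L R s t by (meson le_less_trans less_le_trans)
  qed
  have P3: "block_ends n \<theta>k \<subseteq> block_ends n \<theta>n"
  proof
    fix x assume "x \<in> block_ends n \<theta>k"
    hence "x \<in> a ` {1..m}" using ab by simp
    then obtain j where j: "j \<in> {1..m}" "x = a j" by blast
    show "x \<in> block_ends n \<theta>n"
    proof (cases "j = m")
      case True thus ?thesis using j am n1 by (auto simp: block_ends_def)
    next
      case False
      hence jj: "j \<in> {1..m-1}" using j by auto
      hence "\<theta>n (a j) < \<theta>n (Suc (a j))" using P2[OF jj] by linarith
      moreover have "1 \<le> a j" "a j \<le> n" using a_lt[of 0 j] a0 a_bd[of j] j by auto
      ultimately show ?thesis using j by (auto simp: block_ends_def)
    qed
  qed
  show ?thesis using P1 P2 P3 by blast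
qed

end

theorem mainTheorem12:
  fixes n k m :: nat and X \<theta>k \<theta>n :: "nat \<Rightarrow> real" and a :: "nat \<Rightarrow> nat"
  assumes "1 \<le> k" and "k \<le> n"
    and "is_minimizer n X (Theta_up n k) \<theta>k"
    and "is_minimizer n X (Theta_mono n) \<theta>n"
    and "a 0 = 0" and "a m = n" and "\<forall>j<m. a j < a (Suc j)"
    and "a ` {1..m} = block_ends n \<theta>k"
  shows "(\<forall>j\<in>{1..m}. \<forall>i\<in>{a (j-1)<..a j}. \<theta>k i = avg X (a (j-1)) (a j))
    \<and> (\<forall>j\<in>{1..m-1}.
         (\<forall>s t. s < a j \<longrightarrow> a j < t \<longrightarrow> t \<le> n \<longrightarrow>
            avg X s (a j) < (\<theta>k (a j) + \<theta>k (a (Suc j))) / 2 \<and>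
            (\<theta>k (a j) + \<theta>k (a (Suc j))) / 2 < avg X (a j) t)
       \<and> \<theta>n (a j) < (\<theta>k (a j) + \<theta>k (a (Suc j))) / 2
       \<and> (\<theta>k (a j) + \<theta>k (a (Suc j))) / 2 < \<theta>n (Suc (a j)))
    \<and> block_ends n \<theta>k \<subseteq> block_ends n \<theta>n"
proof -
  interpret stp n k m X \<theta>k \<theta>n a using assms by unfold_locales
  show ?thesis by (rule main)
qed

end
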